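(* Under the hypotheses of the hyperbolic Minkowski formula (isometric immersion $x:M\to B^{\mathbb{H}}_R$, $x(\partial M)\subset\partial B^{\mathbb{H}}_R$, constant contact angle $\theta\in(0,\pi)$), for every constant $a\in\mathbb{R}^{n+1}$, along $\partial M$: $$\bar\nabla_\mu\big(V_a+\sinh R\cos\theta\,\bar g(Y_a,\nu)\big)=q\big(V_a+\sinh R\cos\theta\,\bar g(Y_a,\nu)\big),\qquad \bar\nabla_\mu\bar g(X_a,\nu)=q\,\bar g(X_a,\nu),$$ where $q=\frac{\coth R}{\sin\theta}+\cot\theta\,h(\mu,\mu)$.
   Context: $\mathbb{H}^{n+1}=(\mathbb{B}^{n+1},\bar g=\frac{4}{(1-|x|^2)^2}\delta)$; $B^{\mathbb{H}}_R$ is the closed hyperbolic ball of radius $R$ centered at $0$, of Euclidean radius $R_{\mathbb{R}}=\tanh(R/2)$. $V_a=\frac{2\langle x,a\rangle}{1-|x|^2}$, $X_a=\frac{2}{1-R_{\mathbb{R}}^2}[\langle x,a\rangle x-\frac12(|x|^2+R_{\mathbb{R}}^2)a]$, $Y_a=\frac12(|x|^2+1)a-\langle x,a\rangle x$. $\nu$ is a unit normal, $h(X,Y)=\bar g(\bar\nabla_X\nu,Y)$; $\bar N=x/\sinh R$ the outward normal of $\partial B^{\mathbb{H}}_R$, $\mu$ the outward conormal of $\partial M$ in $M$, $\bar\nu$ the unit normal of $\partial M$ in $\partial B^{\mathbb{H}}_R$ with $\{\nu,\mu\}$, $\{\bar\nu,\bar N\}$ equally oriented; constant angle: $\mu=\sin\theta\,\bar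 N+\cos\theta\,\bar\nu$, $\nu=-\cos\theta\,\bar N+\sin\theta\,\bar\nu$. *)

theory Defs
  imports "HOL-Analysis.Analysis"
begin

text \<open>Poincare ball model of hyperbolic space: points p of a Euclidean space with
  norm p < 1, metric gbar_p(X,Y) = 4/(1-|p|^2)^2 <X,Y>.\<close>

definition gbar :: "'b::euclidean_space \<Rightarrow> 'b \<Rightarrow> 'b \<Rightarrow> real" where
  "gbar p X Y = 4 / (1 - (norm p)\<^sup>2)\<^sup>2 * (X \<bullet> Y)"

text \<open>Euclidean gradient of the conformal factor phi = ln (2/(1-|p|^2)),
  gbar = exp(2 phi) delta.\<close>
definition grad_phi :: "'b::euclidean_space \<Rightarrow> 'b" where
  "grad_phi p = (2 / (1 - (norm p)\<^sup>2)) *\<^sub>R p"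

text \<open>Levi-Civita covariant derivative of gbar of a vector field Y along a curve/map
  at the point p in direction X, where DY is the ordinary (Euclidean) derivative of Y in
  direction X:  nabla_X Y = D_X Y + X(phi) Y + Y(phi) X - <X,Y> grad phi.\<close>
definition cov_deriv :: "'b::euclidean_space \<Rightarrow> 'b \<Rightarrow> 'b \<Rightarrow> 'b \<Rightarrow> 'b" where
  "cov_deriv p X Y DY = DY + (X \<bullet> grad_phi p) *\<^sub>R Y + (Y \<bullet> grad_phi p) *\<^sub>R X
     - (X \<bullet> Y) *\<^sub>R grad_phi p"

definition V_fun :: "'b::euclidean_space \<Rightarrow> 'b \<Rightarrow> real" where
  "V_fun a p = 2 * (p \<bullet> a) / (1 - (norm p)\<^sup>2)"

definition X_fld :: "real \<Rightarrow> 'b::euclidean_space \<Rightarrow> 'b \<Rightarrow> 'b" where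
  "X_fld R a p = (2 / (1 - (tanh (R/2))\<^sup>2)) *\<^sub>R
     ((p \<bullet> a) *\<^sub>R p - (1/2 * ((norm p)\<^sup>2 + (tanh (R/2))\<^sup>2)) *\<^sub>R a)"

definition Y_fld :: "'b::euclidean_space \<Rightarrow> 'b \<Rightarrow> 'b" where
  "Y_fld a p = (1/2 * ((norm p)\<^sup>2 + 1)) *\<^sub>R a - (p \<bullet> a) *\<^sub>R p"

definition dir_deriv :: "('a::real_normed_vector \<Rightarrow> 'c::real_normed_vector) \<Rightarrow> 'a \<Rightarrow> 'a \<Rightarrow> 'c" where
  "dir_deriv f v = (\<lambda>u. frechet_derivative f (at u) v)"

fun iter_dir_deriv :: "'a::real_normed_vector list \<Rightarrow> ('a \<Rightarrow> 'c::real_normed_vector) \<Rightarrow> 'a \<Rightarrow> 'c" where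
  "iter_dir_deriv [] f = f"
| "iter_dir_deriv (v # vs) f = dir_deriv (iter_dir_deriv vs f) v"

definition smooth_on :: "'a::real_normed_vector set \<Rightarrow> ('a \<Rightarrow> 'c::real_normed_vector) \<Rightarrow> bool" where
  "smooth_on U f \<longleftrightarrow> (\<forall>vs. iter_dir_deriv vs f differentiable_on U)"

end

theory Submission
  imports Defs
begin


lemma range_eq_hyperplane:
  fixes f :: "'a::euclidean_space \<Rightarrow> 'b::euclidean_space"
  assumes lin: "linear f" and inj: "inj f" and n: "n \<noteq> 0"
    and orth: "\<And>v. n \<bullet> f v = 0" and dim: "DIM('b) = DIM('a) + 1"
  shows "range f = {y. n \<bullet> y = 0}"
proof (rule subspace_dim_equal)
  show "subspace (range f)" using lin by (metis linear_subspace_image subspace_UNIV)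
  show "subspace {y. n \<bullet> y = 0}" by (rule subspace_hyperplane)
  show "range f \<subseteq> {y. n \<bullet> y = 0}" using orth by auto
  have "dim (range f) = dim (UNIV :: 'a set)"
    using dim_image_eq[of f UNIV] lin inj by (simp add: inj_on_def inj_def)
  then show "dim {y. n \<bullet> y = 0} \<le> dim (range f)"
    using dim_hyperplane[OF n] dim by simp
qed

lemma tanh_facts:
  fixes R :: real assumes "R > 0"
  shows "0 < tanh (R/2)" "tanh (R/2) < 1"
    "sinh R = 2 / (1 - (tanh (R/2))\<^sup>2) * tanh (R/2)"
    "cosh R = 2 / (1 - (tanh (R/2))\<^sup>2) * (1 + (tanh (R/2))\<^sup>2) / 2"
proof -
  show "0 < tanh (R/2)" using assms by simp
  show "tanh (R/2) < 1" by (rule tanh_real_lt_1)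
  define y where "y = R/2"
  have R: "R = 2*y" by (simp add: y_def)
  have C: "cosh y > 0" by simp
  have sq: "cosh y ^ 2 = sinh y ^ 2 + 1" by (rule cosh_square_eq)
  have t: "tanh y = sinh y / cosh y" by (simp add: tanh_def)
  have d: "1 - (tanh y)\<^sup>2 = 1 / (cosh y)^2"
  proof -
    have "1 + sinh y * sinh y > 0" by (simp add: add_pos_nonneg)
    then show ?thesis using C sq by (simp add: t field_simps power2_eq_square)
  qed
  show "sinh R = 2 / (1 - (tanh (R/2))\<^sup>2) * tanh (R/2)"
  proof -
    have "sinh (2*y) = 2 / (1 - (tanh y)\<^sup>2) * tanh y"
      unfolding d sinh_double using C by (simp add: t power2_eq_square)
    then show ?thesis by (simp add: y_def)
  qed
  show "cosh R = 2 / (1 - (tanh (R/2))\<^sup>2) * (1 + (tanh (R/2))\<^sup>2) / 2"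
  proof -
    have "cosh (2*y) = 2 / (1 - (tanh y)\<^sup>2) * (1 + (tanh y)\<^sup>2) / 2"
      unfolding d cosh_double using C by (simp add: t power2_eq_square field_simps)
    then show ?thesis by (simp add: y_def)
  qed
qed

lemma dir_const:
  fixes f :: "'a::real_normed_vector \<Rightarrow> 'b::real_normed_vector"
  assumes fd: "(f has_derivative f') (at u)" and d: "\<delta> > 0"
    and c: "\<And>s. 0 \<le> s \<Longrightarrow> s \<le> \<delta> \<Longrightarrow> f (u + s *\<^sub>R y) = f u"
  shows "f' y = 0"
proof -
  have lin: "bounded_linear f'" using fd by (simp add: has_derivative_def)
  have a: "((\<lambda>s. u + s *\<^sub>R y) has_derivative (\<lambda>s. s *\<^sub>R y)) (at 0 within {0..\<delta>})"
    by (auto intro!: derivative_eq_intros)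
  have "((\<lambda>s. f (u + s *\<^sub>R y)) has_derivative (\<lambda>s. f' (s *\<^sub>R y))) (at 0 within {0..\<delta>})"
    by (rule has_derivative_compose[OF a]) (simp add: fd)
  then have g: "((\<lambda>s. f (u + s *\<^sub>R y)) has_derivative (\<lambda>s. s *\<^sub>R f' y)) (at 0 within {0..\<delta>})"
    using lin by (simp add: linear_simps)
  have g2: "((\<lambda>s. f u) has_derivative (\<lambda>s. s *\<^sub>R f' y)) (at 0 within {0..\<delta>})"
    by (rule has_derivative_transform_within[OF g d]) (use d c in auto)
  have g3: "((\<lambda>s. f u) has_derivative (\<lambda>s. s *\<^sub>R 0)) (at 0 within {0..\<delta>})"
    by simp
  have nb: "at (0::real) within {0..\<delta>} \<noteq> bot"
    using d by (simp add: at_within_Icc_at_right)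
  have "f' y = 0"
    using vector_derivative_unique_within[OF nb g2[folded has_vector_derivative_def] g3[folded has_vector_derivative_def]] .
  then show ?thesis .
qed

lemma small_step:
  fixes u z :: "'a::real_normed_vector"
  assumes "ball u r \<subseteq> U" "r > 0"
  obtains \<delta> where "\<delta> > 0" "\<And>s. 0 \<le> s \<Longrightarrow> s \<le> \<delta> \<Longrightarrow> u + s *\<^sub>R z \<in> U"
proof -
  define \<delta> where "\<delta> = r / (2 * (norm z + 1))"
  have dp: "\<delta> > 0" using assms unfolding \<delta>_def by (intro divide_pos_pos) (auto, smt (verit) norm_ge_zero)
  have "u + s *\<^sub>R z \<in> U" if "0 \<le> s" "s \<le> \<delta>" for s
  proof -
    have "norm (s *\<^sub>R z) \<le> \<delta> * norm z" using that by (simp add: mult_right_mono)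
    also have "\<delta> * norm z < r"
    proof -
      have "\<delta> * norm z = r * (norm z / (2 * (norm z + 1)))" by (simp add: \<delta>_def)
      also have "norm z / (2 * (norm z + 1)) < 1"
      proof -
        have a: "0 < 2 * (norm z + 1)" by (smt (verit) norm_ge_zero)
        have b: "norm z < 2 * (norm z + 1)" by (smt (verit) norm_ge_zero)
        show ?thesis using divide_less_eq_1_pos[OF a] b by blast
      qed
      then have "r * (norm z / (2 * (norm z + 1))) < r * 1" using assms(2) by (intro mult_strict_left_mono) auto
      finally show ?thesis by simp
    qed
    finally have "dist u (u + s *\<^sub>R z) < r" by (simp add: dist_norm)
    then show ?thesis using assms(1) by auto
  qed
  then show ?thesis using that dp by blast
qed

lemma halfspace_zero:
  fixes f :: "'a::euclidean_space \<Rightarrow> 'b::real_normed_vector"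
  assumes fd: "(f has_derivative f') (at u)" and U: "open U" "u \<in> U" and ue: "u \<bullet> e = 0" and e: "e \<noteq> 0"
    and c: "\<And>v. v \<in> U \<Longrightarrow> v \<bullet> e \<ge> 0 \<Longrightarrow> f v = f u"
  shows "f' y = 0"
proof -
  have lin: "linear f'" using fd by (simp add: has_derivative_def bounded_linear.linear)
  obtain r where r: "r > 0" "ball u r \<subseteq> U" using U open_contains_ball by blast
  have pos: "f' z = 0" if z: "z \<bullet> e > 0" for z
  proof -
    obtain \<delta> where d: "\<delta> > 0" "\<And>s. 0 \<le> s \<Longrightarrow> s \<le> \<delta> \<Longrightarrow> u + s *\<^sub>R z \<in> U"
      using small_step[OF r(2) r(1)] by blast
    show ?thesis
    proof (rule dir_const[OF fd d(1)])
      fix s :: real assume s: "0 \<le> s" "s \<le> \<delta>"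
      have "(u + s *\<^sub>R z) \<bullet> e \<ge> 0" using s z ue by (simp add: inner_add_left)
      then show "f (u + s *\<^sub>R z) = f u" using c d(2)[OF s] by blast
    qed
  qed
  have ee: "e \<bullet> e > 0" using e by simp
  define k where "k = (\<bar>y \<bullet> e\<bar> + 1) / (e \<bullet> e)"
  have "(y + k *\<^sub>R e) \<bullet> e = y \<bullet> e + \<bar>y \<bullet> e\<bar> + 1"
    using ee by (simp add: k_def inner_add_left)
  then have "(y + k *\<^sub>R e) \<bullet> e > 0" by linarith
  then have "f' (y + k *\<^sub>R e) = 0" by (rule pos)
  moreover have "f' e = 0" using pos ee by simp
  ultimately show ?thesis using lin by (simp add: linear_add linear_scale)
qed

lemma bdry_zero:
  fixes f :: "'a::euclidean_space \<Rightarrow> 'b::real_normed_vector"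
  assumes fd: "(f has_derivative f') (at u)" and U: "open U" "u \<in> U" and ue: "u \<bullet> e = 0" and z: "z \<bullet> e = 0"
    and c: "\<And>v. v \<in> U \<Longrightarrow> v \<bullet> e = 0 \<Longrightarrow> f v = f u"
  shows "f' z = 0"
proof -
  obtain r where r: "r > 0" "ball u r \<subseteq> U" using U open_contains_ball by blast
  obtain \<delta> where d: "\<delta> > 0" "\<And>s. 0 \<le> s \<Longrightarrow> s \<le> \<delta> \<Longrightarrow> u + s *\<^sub>R z \<in> U"
    using small_step[OF r(2) r(1)] by blast
  show ?thesis
  proof (rule dir_const[OF fd d(1)])
    fix s :: real assume s: "0 \<le> s" "s \<le> \<delta>"
    have "(u + s *\<^sub>R z) \<bullet> e = 0" using z ue by (simp add: inner_add_left)
    then show "f (u + s *\<^sub>R z) = f u" using c d(2)[OF s] by blast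
  qed
qed

lemma line_deriv:
  fixes g :: "'a::euclidean_space \<Rightarrow> 'b::euclidean_space"
  assumes "g differentiable (at (p + s *\<^sub>R y))"
  shows "((\<lambda>s. g (p + s *\<^sub>R y) \<bullet> b) has_derivative (\<lambda>d. d * (dir_deriv g y (p + s *\<^sub>R y) \<bullet> b))) (at s within S)"
proof -
  have gd: "(g has_derivative frechet_derivative g (at (p + s *\<^sub>R y))) (at (p + s *\<^sub>R y))"
    using assms frechet_derivative_works by blast
  have lin: "linear (frechet_derivative g (at (p + s *\<^sub>R y)))"
    using gd by (simp add: has_derivative_def bounded_linear.linear)
  have a: "((\<lambda>s. p + s *\<^sub>R y) has_derivative (\<lambda>d. d *\<^sub>R y)) (at s within S)"
    by (auto intro!: derivative_eq_intros)
  have "((\<lambda>s. g (p + s *\<^sub>R y)) has_derivative (\<lambda>d. frechet_derivative g (at (p + s *\<^sub>R y)) (d *\<^sub>R y))) (at s within S)"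
    by (rule has_derivative_compose[OF a]) (simp add: gd)
  then have "((\<lambda>s. g (p + s *\<^sub>R y) \<bullet> b) has_derivative (\<lambda>d. frechet_derivative g (at (p + s *\<^sub>R y)) (d *\<^sub>R y) \<bullet> b)) (at s within S)"
    by (rule has_derivative_inner_left)
  then show ?thesis using lin by (simp add: dir_deriv_def linear_scale)
qed

lemma mvt2:
  fixes f :: "'a::euclidean_space \<Rightarrow> 'b::euclidean_space"
  assumes f: "\<And>q. q \<in> U \<Longrightarrow> f differentiable (at q)"
   and fv: "\<And>q. q \<in> U \<Longrightarrow> dir_deriv f v differentiable (at q)"
   and h: "h > 0"
   and P: "\<And>s t. 0 \<le> s \<Longrightarrow> s \<le> h \<Longrightarrow> 0 \<le> t \<Longrightarrow> t \<le> h \<Longrightarrow> u + s *\<^sub>R v + t *\<^sub>R w \<in> U"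
  shows "\<exists>\<xi> \<eta>. 0 < \<xi> \<and> \<xi> < h \<and> 0 < \<eta> \<and> \<eta> < h \<and>
     (f (u + h *\<^sub>R v + h *\<^sub>R w) - f (u + h *\<^sub>R v) - f (u + h *\<^sub>R w) + f u) \<bullet> b
       = h * h * (dir_deriv (dir_deriv f v) w (u + \<xi> *\<^sub>R v + \<eta> *\<^sub>R w) \<bullet> b)"
proof -
  define A where "A s = f (u + h *\<^sub>R w + s *\<^sub>R v) \<bullet> b - f (u + s *\<^sub>R v) \<bullet> b" for s
  have "(A has_derivative (\<lambda>d. d * (dir_deriv f v (u + h *\<^sub>R w + s *\<^sub>R v) \<bullet> b)
          - d * (dir_deriv f v (u + s *\<^sub>R v) \<bullet> b))) (at s within {0..h})"
    if s: "0 \<le> s" "s \<le> h" for s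
  proof -
    have 1: "u + h *\<^sub>R w + s *\<^sub>R v \<in> U" using P[of s h] s h by (simp add: algebra_simps)
    have 2: "u + s *\<^sub>R v \<in> U" using P[of s 0] s h by simp
    show ?thesis unfolding A_def
      by (intro has_derivative_diff line_deriv f 1 2)
  qed
  from mvt_simple[OF h, of A, OF this] obtain \<xi> where xi: "\<xi> \<in> {0<..<h}" and
    A: "A h - A 0 = (h - 0) * (dir_deriv f v (u + h *\<^sub>R w + \<xi> *\<^sub>R v) \<bullet> b) - (h - 0) * (dir_deriv f v (u + \<xi> *\<^sub>R v) \<bullet> b)"
    by blast
  define B where "B t = dir_deriv f v (u + \<xi> *\<^sub>R v + t *\<^sub>R w) \<bullet> b" for t
  have "(B has_derivative (\<lambda>d. d * (dir_deriv (dir_deriv f v) w (u + \<xi> *\<^sub>R v + t *\<^sub>R w) \<bullet> b))) (at t within {0..h})"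
    if t: "0 \<le> t" "t \<le> h" for t
  proof -
    have 1: "u + \<xi> *\<^sub>R v + t *\<^sub>R w \<in> U" using P[of \<xi> t] t xi by simp
    show ?thesis unfolding B_def by (intro line_deriv fv 1)
  qed
  from mvt_simple[OF h, of B, OF this] obtain \<eta> where eta: "\<eta> \<in> {0<..<h}" and
    B: "B h - B 0 = (h - 0) * (dir_deriv (dir_deriv f v) w (u + \<xi> *\<^sub>R v + \<eta> *\<^sub>R w) \<bullet> b)"
    by blast
  have "(f (u + h *\<^sub>R v + h *\<^sub>R w) - f (u + h *\<^sub>R v) - f (u + h *\<^sub>R w) + f u) \<bullet> b = A h - A 0"
    by (simp add: A_def inner_diff_left inner_add_left add.commute add.left_commute)
  also have "\<dots> = h * (B h - B 0)" unfolding A B_def by (simp add: right_diff_distrib add.commute add.left_commute)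
  also have "\<dots> = h * h * (dir_deriv (dir_deriv f v) w (u + \<xi> *\<^sub>R v + \<eta> *\<^sub>R w) \<bullet> b)"
    using B by simp
  finally show ?thesis using xi eta by auto
qed

lemma schwarz:
  fixes f :: "'a::euclidean_space \<Rightarrow> 'b::euclidean_space"
  assumes U: "open U" "u \<in> U"
   and f: "f differentiable_on U" and fv: "dir_deriv f v differentiable_on U"
   and fw: "dir_deriv f w differentiable_on U"
   and cvw: "continuous_on U (dir_deriv (dir_deriv f v) w)"
   and cwv: "continuous_on U (dir_deriv (dir_deriv f w) v)"
  shows "dir_deriv (dir_deriv f v) w u = dir_deriv (dir_deriv f w) v u"
proof -
  define c1 where "c1 = dir_deriv (dir_deriv f v) w"
  define c2 where "c2 = dir_deriv (dir_deriv f w) v"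
  have fa: "\<And>q. q \<in> U \<Longrightarrow> f differentiable (at q)"
    using f U(1) differentiable_on_eq_differentiable_at by blast
  have fva: "\<And>q. q \<in> U \<Longrightarrow> dir_deriv f v differentiable (at q)"
    using fv U(1) differentiable_on_eq_differentiable_at by blast
  have fwa: "\<And>q. q \<in> U \<Longrightarrow> dir_deriv f w differentiable (at q)"
    using fw U(1) differentiable_on_eq_differentiable_at by blast
  have key: "\<bar>c1 u \<bullet> b - c2 u \<bullet> b\<bar> < \<epsilon>" if ep: "\<epsilon> > 0" for \<epsilon> b
  proof -
    define e where "e = \<epsilon> / (2 * (norm b + 1))"
    have nb: "0 < 2 * (norm b + 1)" by (smt (verit) norm_ge_zero)
    have e: "e > 0" using ep nb by (simp add: e_def)
    obtain d1 where d1: "d1 > 0" "\<And>q. q \<in> U \<Longrightarrow> dist q u < d1 \<Longrightarrow> dist (c1 q) (c1 u) < e"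
      using cvw U(2) e unfolding continuous_on_iff c1_def by blast
    obtain d2 where d2: "d2 > 0" "\<And>q. q \<in> U \<Longrightarrow> dist q u < d2 \<Longrightarrow> dist (c2 q) (c2 u) < e"
      using cwv U(2) e unfolding continuous_on_iff c2_def by blast
    obtain r where r: "r > 0" "ball u r \<subseteq> U" using U open_contains_ball by blast
    define m where "m = min (min d1 d2) r"
    have m: "m > 0" using d1 d2 r by (simp add: m_def)
    define h where "h = m / (2 * (norm v + norm w + 1))"
    have nvw: "0 < 2 * (norm v + norm w + 1)" by (smt (verit) norm_ge_zero)
    have h: "h > 0" using m nvw by (simp add: h_def)
    have close: "dist (u + s *\<^sub>R v + t *\<^sub>R w) u < m"
      if st: "0 \<le> s" "s \<le> h" "0 \<le> t" "t \<le> h" for s t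
    proof -
      have "dist (u + s *\<^sub>R v + t *\<^sub>R w) u = norm (s *\<^sub>R v + t *\<^sub>R w)"
        by (simp add: dist_norm)
      also have "\<dots> \<le> norm (s *\<^sub>R v) + norm (t *\<^sub>R w)" by (rule norm_triangle_ineq)
      also have "\<dots> \<le> h * norm v + h * norm w"
        using st by (intro add_mono) (auto intro: mult_right_mono)
      also have "\<dots> < m"
      proof -
        have "h * norm v + h * norm w = m * ((norm v + norm w) / (2 * (norm v + norm w + 1)))"
          by (simp add: h_def add_divide_distrib distrib_left)
        also have "(norm v + norm w) / (2 * (norm v + norm w + 1)) < 1"
          using divide_less_eq_1_pos[OF nvw] by (smt (verit) norm_ge_zero)
        then have "m * ((norm v + norm w) / (2 * (norm v + norm w + 1))) < m * 1"
          using m by (intro mult_strict_left_mono) auto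
        finally show ?thesis by simp
      qed
      finally show ?thesis .
    qed
    have inU: "u + s *\<^sub>R v + t *\<^sub>R w \<in> U"
      if st: "0 \<le> s" "s \<le> h" "0 \<le> t" "t \<le> h" for s t
      using close[OF st] r(2) by (auto simp: m_def dist_commute)
    have inU': "u + s *\<^sub>R w + t *\<^sub>R v \<in> U"
      if st: "0 \<le> s" "s \<le> h" "0 \<le> t" "t \<le> h" for s t
      using inU[of t s] st by (simp add: add.commute add.left_commute)
    obtain \<xi> \<eta> where xe: "0 < \<xi>" "\<xi> < h" "0 < \<eta>" "\<eta> < h" and
      E1: "(f (u + h *\<^sub>R v + h *\<^sub>R w) - f (u + h *\<^sub>R v) - f (u + h *\<^sub>R w) + f u) \<bullet> b
       = h * h * (c1 (u + \<xi> *\<^sub>R v + \<eta> *\<^sub>R w) \<bullet> b)"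
      using mvt2[of U f v h u w b, OF fa fva h inU] unfolding c1_def by blast
    obtain \<xi>' \<eta>' where xe': "0 < \<xi>'" "\<xi>' < h" "0 < \<eta>'" "\<eta>' < h" and
      E2: "(f (u + h *\<^sub>R w + h *\<^sub>R v) - f (u + h *\<^sub>R w) - f (u + h *\<^sub>R v) + f u) \<bullet> b
       = h * h * (c2 (u + \<xi>' *\<^sub>R w + \<eta>' *\<^sub>R v) \<bullet> b)"
      using mvt2[of U f w h u v b, OF fa fwa h inU'] unfolding c2_def by blast
    define q1 where "q1 = u + \<xi> *\<^sub>R v + \<eta> *\<^sub>R w"
    define q2 where "q2 = u + \<eta>' *\<^sub>R v + \<xi>' *\<^sub>R w"
    have q2': "u + \<xi>' *\<^sub>R w + \<eta>' *\<^sub>R v = q2" by (simp add: q2_def add.commute add.left_commute)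
    have "h * h * (c1 q1 \<bullet> b) = h * h * (c2 q2 \<bullet> b)"
      using E1 E2 unfolding q1_def q2'[symmetric] by (simp add: add.commute add.left_commute algebra_simps)
    then have eq: "c1 q1 \<bullet> b = c2 q2 \<bullet> b" using h by simp
    have q1U: "q1 \<in> U" "dist q1 u < m" unfolding q1_def using inU close xe by auto
    have q2U: "q2 \<in> U" "dist q2 u < m" unfolding q2_def using inU close xe' by auto
    have n1: "norm (c1 u - c1 q1) < e" using d1(2)[OF q1U(1)] q1U(2) by (simp add: m_def dist_norm norm_minus_commute)
    have n2: "norm (c2 u - c2 q2) < e" using d2(2)[OF q2U(1)] q2U(2) by (simp add: m_def dist_norm norm_minus_commute)
    have "\<bar>c1 u \<bullet> b - c2 u \<bullet> b\<bar> = \<bar>(c1 u - c1 q1) \<bullet> b - (c2 u - c2 q2) \<bullet> b\<bar>"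
      using eq by (simp add: inner_diff_left)
    also have "\<dots> \<le> \<bar>(c1 u - c1 q1) \<bullet> b\<bar> + \<bar>(c2 u - c2 q2) \<bullet> b\<bar>" by linarith
    also have "\<dots> \<le> norm (c1 u - c1 q1) * norm b + norm (c2 u - c2 q2) * norm b"
      by (intro add_mono Cauchy_Schwarz_ineq2)
    also have "\<dots> \<le> e * norm b + e * norm b"
      using n1 n2 by (intro add_mono mult_right_mono) auto
    also have "\<dots> < \<epsilon>"
    proof -
      have "2 * e = \<epsilon> / (norm b + 1)" unfolding e_def by (metis mult_divide_mult_cancel_left_if zero_neq_numeral times_divide_eq_right)
      then have "e * norm b + e * norm b = \<epsilon> * (norm b / (norm b + 1))"
        by (metis (no_types, lifting) mult.commute mult_2 distrib_right times_divide_eq_left times_divide_eq_right)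
      also have "norm b / (norm b + 1) < 1" by (smt (verit) divide_less_eq_1_pos norm_ge_zero)
      then have "\<epsilon> * (norm b / (norm b + 1)) < \<epsilon> * 1" using ep by (intro mult_strict_left_mono) auto
      finally show ?thesis by simp
    qed
    finally show ?thesis .
  qed
  have "(c1 u - c2 u) \<bullet> b = 0" for b
  proof (rule ccontr)
    assume "(c1 u - c2 u) \<bullet> b \<noteq> 0"
    then have "\<bar>c1 u \<bullet> b - c2 u \<bullet> b\<bar> > 0" by (simp add: inner_diff_left)
    from key[OF this, of b] show False by simp
  qed
  from this[of "c1 u - c2 u"] show ?thesis unfolding c1_def c2_def by simp
qed

lemma alg2:
  fixes t s c am an mdn L sg ch pm pn pa ndn pdn nba nbdn Xn Xdn q :: real
  assumes t: "t > 0" and L: "L  *  (1 - t^2) = 2" and s: "s > 0" and sc: "s^2 + c^2 = 1"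
    and sg: "sg = L  *  t" and ch: "ch = L  *  (1 + t^2) / 2"
  and d: "pm = sg * s/L^2" "pn = - (sg * c/L^2)" "pa = sg * (s * am-c * an)"
    "ndn = - (pm/L)" "pdn = sg * (s * mdn-c * ndn)"
    "nba = c * am+s * an" "nbdn = c * mdn+s * ndn"
    "Xn = L * (pa * pn-t^2 * an)" "Xdn = - (L^3 * t^2 * nba * nbdn)"
    "q = ch/sg/s + c/s * (L^2 * mdn - sg * c/L)"
  shows "2 * L^3 * pm * Xn+L^2 * (L * (am * pn-pm * an)+Xdn) = q  *  (L^2 * Xn)"
    "L * am+L^2 * pa * pm+sg * c * (2 * L^3 * pm * (1/2 * (t^2+1) * an-pa * pn)+L^2 * ((pm * an-am * pn)+(1/2 * (t^2+1) * ((pa * pdn-Xdn/L)/t^2)-pa * pdn)))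
       = q  *  (L * pa+sg * c * L^2 * (1/2 * (t^2+1) * an-pa * pn))"
proof -
  have L0: "L \<noteq> 0" using L by auto
  show "2 * L^3 * pm * Xn+L^2 * (L * (am * pn-pm * an)+Xdn) = q  *  (L^2 * Xn)"
    unfolding d sg ch
    using t s L0 apply (simp add: field_simps)
    using sc L by algebra
  show "L * am+L^2 * pa * pm+sg * c * (2 * L^3 * pm * (1/2 * (t^2+1) * an-pa * pn)+L^2 * ((pm * an-am * pn)+(1/2 * (t^2+1) * ((pa * pdn-Xdn/L)/t^2)-pa * pdn)))
       = q  *  (L * pa+sg * c * L^2 * (1/2 * (t^2+1) * an-pa * pn))"
    unfolding d sg ch
    using t s L0 apply (simp add: field_simps)
    using sc L by algebra
qed

lemma gbar_zero: "norm p < 1 \<Longrightarrow> gbar p X Y = 0 \<longleftrightarrow> X \<bullet> Y = 0"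
proof -
  assume "norm p < 1"
  then have "(norm p)^2 < 1^2" by (intro power_strict_mono) auto
  then show ?thesis by (simp add: gbar_def)
qed

lemma gbar_t: "norm p = t \<Longrightarrow> gbar p X Y = (2/(1-t^2))^2 * (X \<bullet> Y)"
  by (simp add: gbar_def power_divide)

schematic_goal F2_deriv:
  fixes x \<nu> :: "'a::euclidean_space \<Rightarrow> 'b::euclidean_space"
  assumes xd: "(x has_derivative X') (at u)" and nd: "(\<nu> has_derivative N') (at u)"
    and nz: "x u \<bullet> x u \<noteq> 1"
  shows "((\<lambda>v. 4 / (1 - x v \<bullet> x v)^2 * ((L *\<^sub>R ((x v \<bullet> a) *\<^sub>R x v - (1/2 * (x v \<bullet> x v + t^2)) *\<^sub>R a)) \<bullet> \<nu> v)) has_derivative ?D) (at u)"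
  apply (rule derivative_intros xd nd | (simp add: nz; fail))+
  done

schematic_goal F1_deriv:
  fixes x \<nu> :: "'a::euclidean_space \<Rightarrow> 'b::euclidean_space"
  assumes xd: "(x has_derivative X') (at u)" and nd: "(\<nu> has_derivative N') (at u)"
    and nz: "x u \<bullet> x u \<noteq> 1"
  shows "((\<lambda>v. 2 * (x v \<bullet> a) / (1 - x v \<bullet> x v) + K * (4 / (1 - x v \<bullet> x v)^2 * (((1/2 * (x v \<bullet> x v + 1)) *\<^sub>R a - (x v \<bullet> a) *\<^sub>R x v) \<bullet> \<nu> v))) has_derivative ?D) (at u)"
  apply (rule derivative_intros xd nd | (simp add: nz; fail))+
  done

lemma solve_lin:
  fixes L t A Q X Y :: real
  assumes "L \<noteq> 0" "t \<noteq> 0" "L * (A - t^2 * Q) = L^2 * (- (L * t^2 * X)) * Y"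
  shows "Q = A / t^2 + L^2 * X * Y"
proof -
  have "L * (A - t^2 * Q) = L * (- (L^2 * t^2 * X * Y))" using assms(3) by (simp add: power2_eq_square algebra_simps)
  then have "A - t^2 * Q = - (L^2 * t^2 * X * Y)" using mult_left_cancel[OF assms(1)] by blast
  then have "t^2 * Q = A + L^2 * t^2 * X * Y" by simp
  then show ?thesis using assms(2) by (simp add: field_simps)
qed



theorem mainTheorem10:
  fixes R \<theta> :: real
    and U :: "'a::euclidean_space set" and e :: 'a
    and x \<nu> \<mu> \<nu>bar :: "'a \<Rightarrow> 'b::euclidean_space"
    and a :: 'b
  defines "M \<equiv> U \<inter> {u. u \<bullet> e \<ge> 0}"
    and "bM \<equiv> U \<inter> {u. u \<bullet> e = 0}"
    and "dx \<equiv> (\<lambda>u. frechet_derivative x (at u))"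
    and "Nbar \<equiv> (\<lambda>u. (1 / sinh R) *\<^sub>R x u)"
  assumes dim: "DIM('b) = DIM('a) + 1"
    and R: "R > 0"
    and \<theta>: "0 < \<theta>" "\<theta> < pi"
    and U: "open U" and e: "e \<noteq> 0"
    and x_smooth: "smooth_on U x"
    and \<nu>_smooth: "smooth_on U \<nu>"
    and immersion: "\<forall>u\<in>M. inj (dx u)"
    and in_ball: "\<forall>u\<in>M. norm (x u) \<le> tanh (R/2)"
    and bdry_in_sphere: "\<forall>u\<in>bM. norm (x u) = tanh (R/2)"
    and normal: "\<forall>u\<in>M. gbar (x u) (\<nu> u) (\<nu> u) = 1 \<and>
                   (\<forall>v. gbar (x u) (\<nu> u) (dx u v) = 0)"
    and conormal: "\<forall>u\<in>bM. (\<exists>w. w \<bullet> e < 0 \<and> \<mu> u = dx u w) \<and>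
                   gbar (x u) (\<mu> u) (\<mu> u) = 1 \<and>
                   (\<forall>v. v \<bullet> e = 0 \<longrightarrow> gbar (x u) (\<mu> u) (dx u v) = 0)"
    and nubar: "\<forall>u\<in>bM. gbar (x u) (\<nu>bar u) (\<nu>bar u) = 1 \<and>
                   gbar (x u) (\<nu>bar u) (Nbar u) = 0 \<and>
                   (\<forall>v. v \<bullet> e = 0 \<longrightarrow> gbar (x u) (\<nu>bar u) (dx u v) = 0)"
    and contact_angle: "\<forall>u\<in>bM.
                   \<mu> u = sin \<theta> *\<^sub>R Nbar u + cos \<theta> *\<^sub>R \<nu>bar u \<and>
                   \<nu> u = (- cos \<theta>) *\<^sub>R Nbar u + sin \<theta> *\<^sub>R \<nu>bar u"
  shows "\<forall>u\<in>bM. \<forall>w. dx u w = \<mu> u \<longrightarrow>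
     (let h\<mu>\<mu> = gbar (x u) (cov_deriv (x u) (\<mu> u) (\<nu> u) (frechet_derivative \<nu> (at u) w)) (\<mu> u);
          q = (cosh R / sinh R) / sin \<theta> + cot \<theta> * h\<mu>\<mu>;
          F1 = (\<lambda>v. V_fun a (x v) + sinh R * cos \<theta> * gbar (x v) (Y_fld a (x v)) (\<nu> v));
          F2 = (\<lambda>v. gbar (x v) (X_fld R a (x v)) (\<nu> v))
      in frechet_derivative F1 (at u) w = q * F1 u \<and>
         frechet_derivative F2 (at u) w = q * F2 u)"
proof (intro ballI allI impI)
  fix u w assume ub: "u \<in> bM" and wm: "dx u w = \<mu> u"
  have uU: "u \<in> U" and ue: "u \<bullet> e = 0" using ub by (auto simp: bM_def)
  have uM: "u \<in> M" using uU ue by (simp add: M_def)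
  have bMM: "\<And>v. v \<in> bM \<Longrightarrow> v \<in> M" by (auto simp: M_def bM_def)
  define t where "t = tanh (R/2)"
  have t0: "0 < t" and t1: "t < 1" using tanh_facts[OF R] by (auto simp: t_def)
  define L where "L = 2 / (1 - t^2)"
  have t2: "t^2 < 1" using t0 t1 by (simp add: power_less_one_iff)
  have t2': "1 - t^2 \<noteq> 0" using t2 by simp
  have Lt: "L * (1 - t^2) = 2" unfolding L_def using t2' by (metis divide_eq_eq)
  have L0: "L > 0" using t2 by (simp add: L_def)
  define \<sigma> where "\<sigma> = sinh R"
  have sg: "\<sigma> = L * t" using tanh_facts[OF R] by (simp add: \<sigma>_def L_def t_def)
  have ch: "cosh R = L * (1 + t^2) / 2" using tanh_facts[OF R] by (simp add: L_def t_def)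
  have sg0: "\<sigma> > 0" using sg L0 t0 by simp
  define s where "s = sin \<theta>"
  define c where "c = cos \<theta>"
  have s0: "s > 0" using \<theta> by (simp add: s_def sin_gt_zero)
  have sc: "s^2 + c^2 = 1" by (simp add: s_def c_def)
  have nM: "\<And>v. v \<in> M \<Longrightarrow> norm (x v) < 1" using in_ball t1 t_def by force
  have gM: "\<And>v X Y. v \<in> M \<Longrightarrow> gbar (x v) X Y = 0 \<longleftrightarrow> X \<bullet> Y = 0"
    using nM gbar_zero by blast
  have gB: "\<And>v X Y. v \<in> bM \<Longrightarrow> gbar (x v) X Y = L^2 * (X \<bullet> Y)"
    using bdry_in_sphere gbar_t unfolding L_def t_def by blast
  have xxB: "\<And>v. v \<in> bM \<Longrightarrow> x v \<bullet> x v = t^2"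
    using bdry_in_sphere by (simp add: t_def power2_norm_eq_inner[symmetric])
  have xdiffU: "x differentiable_on U" using x_smooth unfolding smooth_on_def
    by (metis iter_dir_deriv.simps(1))
  have \<nu>diffU: "\<nu> differentiable_on U" using \<nu>_smooth unfolding smooth_on_def
    by (metis iter_dir_deriv.simps(1))
  have ddiffU: "\<And>z. dir_deriv x z differentiable_on U" using x_smooth unfolding smooth_on_def
    by (metis iter_dir_deriv.simps)
  have dddiffU: "\<And>z z'. dir_deriv (dir_deriv x z) z' differentiable_on U" using x_smooth unfolding smooth_on_def
    by (metis iter_dir_deriv.simps)
  have xd: "(x has_derivative dx u) (at u)"
    using xdiffU U uU differentiable_on_eq_differentiable_at frechet_derivative_works dx_def by blast
  define Dv where "Dv = frechet_derivative \<nu> (at u)"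
  have \<nu>d: "(\<nu> has_derivative Dv) (at u)"
    using \<nu>diffU U uU differentiable_on_eq_differentiable_at frechet_derivative_works Dv_def by blast
  have lin_dx: "linear (dx u)" using xd by (simp add: has_derivative_def bounded_linear.linear)
  have lin_Dv: "linear Dv" using \<nu>d by (simp add: has_derivative_def bounded_linear.linear)
  define p where "p = x u"
  define n where "n = \<nu> u"
  define m where "m = \<mu> u"
  define nb where "nb = \<nu>bar u"
  define dn where "dn = Dv w"
  have wm': "dx u w = m" using wm by (simp add: m_def)
  have pp: "p \<bullet> p = t^2" using xxB ub by (simp add: p_def)
  have nor: "gbar (x u) (\<nu> u) (\<nu> u) = 1" "\<And>v. gbar (x u) (\<nu> u) (dx u v) = 0" using normal uM by auto
  have con: "gbar (x u) (\<mu> u) (\<mu> u) = 1" "\<And>v. v \<bullet> e = 0 \<Longrightarrow> gbar (x u) (\<mu> u) (dx u v) = 0"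
    using conormal ub by auto
  have nbr: "gbar (x u) (\<nu>bar u) (\<nu>bar u) = 1" "gbar (x u) (\<nu>bar u) (Nbar u) = 0"
    using nubar ub by auto
  have nn: "L^2 * (n \<bullet> n) = 1" using nor(1) gB[OF ub] by (simp add: n_def)
  have ndx: "\<And>v. n \<bullet> dx u v = 0" using nor(2) gM[OF uM] by (simp add: n_def)
  have mm: "L^2 * (m \<bullet> m) = 1" using con(1) gB[OF ub] by (simp add: m_def)
  have mdx: "\<And>v. v \<bullet> e = 0 \<Longrightarrow> m \<bullet> dx u v = 0" using con(2) gB[OF ub] L0 by (simp add: m_def)
  have nbnb: "L^2 * (nb \<bullet> nb) = 1" using nbr(1) gB[OF ub] by (simp add: nb_def)
  have nbp: "nb \<bullet> p = 0" using nbr(2) gB[OF ub] L0 sg0 by (simp add: nb_def p_def Nbar_def \<sigma>_def)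
  have mn: "m \<bullet> n = 0" using ndx[of w] wm' by (simp add: inner_commute)
  have cm: "m = (s / \<sigma>) *\<^sub>R p + c *\<^sub>R nb" and cn: "n = (- c / \<sigma>) *\<^sub>R p + s *\<^sub>R nb"
    using contact_angle ub by (auto simp: m_def n_def p_def nb_def Nbar_def s_def c_def \<sigma>_def)
  have p_eq: "p = \<sigma> *\<^sub>R (s *\<^sub>R m - c *\<^sub>R n)"
  proof -
    have "s *\<^sub>R m - c *\<^sub>R n = (s * (s/\<sigma>) - c * (-c/\<sigma>)) *\<^sub>R p + (s * c - c * s) *\<^sub>R nb"
      unfolding cm cn by (simp add: algebra_simps)
    also have "\<dots> = ((s^2 + c^2) / \<sigma>) *\<^sub>R p" by (simp add: power2_eq_square add_divide_distrib)
    finally have "s *\<^sub>R m - c *\<^sub>R n = (1 / \<sigma>) *\<^sub>R p" using sc by simp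
    then show ?thesis using sg0 by simp
  qed
  have nb_eq: "nb = c *\<^sub>R m + s *\<^sub>R n"
  proof -
    have "c *\<^sub>R m + s *\<^sub>R n = (c * (s/\<sigma>) + s * (-c/\<sigma>)) *\<^sub>R p + (c * c + s * s) *\<^sub>R nb"
      unfolding cm cn by (simp add: algebra_simps)
    also have "\<dots> = (s^2 + c^2) *\<^sub>R nb" by (simp add: power2_eq_square algebra_simps)
    finally show ?thesis using sc by simp
  qed
  have D1: "\<And>y. 2 * (n \<bullet> Dv y) + (1 - t^2) * (p \<bullet> dx u y) = 0"
  proof -
    fix y
    define G where "G v = \<nu> v \<bullet> \<nu> v - (1 - x v \<bullet> x v)^2 / 4" for v
    have G0: "G v = 0" if "v \<in> M" for v
    proof -
      have "gbar (x v) (\<nu> v) (\<nu> v) = 1" using normal that by auto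
      moreover have "(norm (x v))^2 < 1^2" using nM[OF that] by (intro power_strict_mono) auto
      ultimately show ?thesis by (simp add: G_def gbar_def power2_norm_eq_inner field_simps)
    qed
    have Gd: "(G has_derivative (\<lambda>y. 2 * (n \<bullet> Dv y) + (1 - p \<bullet> p) * (p \<bullet> dx u y))) (at u)"
      unfolding G_def
      apply (rule derivative_eq_intros xd \<nu>d | simp)+
      apply (simp add: fun_eq_iff n_def p_def inner_commute algebra_simps power2_eq_square)
      apply (simp add: field_simps)
      done
    have "2 * (n \<bullet> Dv y) + (1 - p \<bullet> p) * (p \<bullet> dx u y) = 0"
      by (rule halfspace_zero[OF Gd U uU ue e]) (simp add: G0[OF uM] G0 M_def)
    then show "2 * (n \<bullet> Dv y) + (1 - t^2) * (p \<bullet> dx u y) = 0" using pp by simp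
  qed
  have D2: "\<And>z. z \<bullet> e = 0 \<Longrightarrow> p \<bullet> dx u z = 0"
  proof -
    fix z assume z: "z \<bullet> e = 0"
    have Gd: "((\<lambda>v. x v \<bullet> x v) has_derivative (\<lambda>y. 2 * (p \<bullet> dx u y))) (at u)"
      apply (rule derivative_eq_intros xd | simp)+
      apply (simp add: fun_eq_iff p_def inner_commute)
      done
    have "2 * (p \<bullet> dx u z) = 0"
      by (rule bdry_zero[OF Gd U uU ue z]) (simp add: xxB[OF ub] xxB bM_def)
    then show "p \<bullet> dx u z = 0" by simp
  qed
  have \<nu>xB: "\<And>v. v \<in> bM \<Longrightarrow> \<nu> v \<bullet> x v = - c * t^2 / \<sigma>"
  proof -
    fix v assume v: "v \<in> bM"
    have "gbar (x v) (\<nu>bar v) (Nbar v) = 0" using nubar v by auto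
    then have a: "\<nu>bar v \<bullet> x v = 0" using gB[OF v] L0 sg0 by (simp add: Nbar_def \<sigma>_def)
    have "\<nu> v = (- cos \<theta>) *\<^sub>R Nbar v + sin \<theta> *\<^sub>R \<nu>bar v" using contact_angle v by auto
    then have "\<nu> v \<bullet> x v = (- c / \<sigma>) * (x v \<bullet> x v) + s * (\<nu>bar v \<bullet> x v)"
      by (simp add: Nbar_def c_def s_def \<sigma>_def inner_add_left inner_diff_left)
    then show "\<nu> v \<bullet> x v = - c * t^2 / \<sigma>" using a xxB[OF v] by simp
  qed
  have D3: "\<And>z. z \<bullet> e = 0 \<Longrightarrow> Dv z \<bullet> p + n \<bullet> dx u z = 0"
  proof -
    fix z assume z: "z \<bullet> e = 0"
    have Gd: "((\<lambda>v. \<nu> v \<bullet> x v) has_derivative (\<lambda>y. Dv y \<bullet> p + n \<bullet> dx u y)) (at u)"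
      apply (rule derivative_eq_intros xd \<nu>d | simp)+
      apply (simp add: fun_eq_iff p_def n_def)
      done
    show "Dv z \<bullet> p + n \<bullet> dx u z = 0"
      by (rule bdry_zero[OF Gd U uU ue z]) (simp add: \<nu>xB[OF ub] \<nu>xB bM_def)
  qed
  have Dz: "\<And>z. z \<bullet> e = 0 \<Longrightarrow> Dv z \<bullet> m = 0"
  proof -
    fix z assume z: "z \<bullet> e = 0"
    have a: "Dv z \<bullet> n = 0" using D1[of z] D2[OF z] by (simp add: inner_commute)
    have b: "Dv z \<bullet> p = 0" using D3[OF z] ndx by simp
    have "Dv z \<bullet> p = \<sigma> * (s * (Dv z \<bullet> m) - c * (Dv z \<bullet> n))"
      by (subst p_eq) (simp add: inner_diff_right)
    then show "Dv z \<bullet> m = 0" using a b sg0 s0 by simp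
  qed
  have dxz: "\<And>v z. dx v z = dir_deriv x z v" by (simp add: dx_def dir_deriv_def)
  have zeroM: "\<And>v z. v \<in> M \<Longrightarrow> dir_deriv x z v \<bullet> \<nu> v = 0"
  proof -
    fix v z assume v: "v \<in> M"
    have "gbar (x v) (\<nu> v) (dx v z) = 0" using normal v by auto
    then show "dir_deriv x z v \<bullet> \<nu> v = 0" using gM[OF v] by (simp add: dxz inner_commute)
  qed
  have D4: "\<And>z. z \<bullet> e = 0 \<Longrightarrow> dx u z \<bullet> dn = 0"
  proof -
    fix z assume z: "z \<bullet> e = 0"
    define d1 where "d1 = frechet_derivative (dir_deriv x z) (at u)"
    define d2 where "d2 = frechet_derivative (dir_deriv x w) (at u)"
    have dd1: "(dir_deriv x z has_derivative d1) (at u)"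
      using ddiffU U uU differentiable_on_eq_differentiable_at frechet_derivative_works d1_def by blast
    have dd2: "(dir_deriv x w has_derivative d2) (at u)"
      using ddiffU U uU differentiable_on_eq_differentiable_at frechet_derivative_works d2_def by blast
    have k1: "((\<lambda>v. dir_deriv x z v \<bullet> \<nu> v) has_derivative (\<lambda>y. d1 y \<bullet> n + dx u z \<bullet> Dv y)) (at u)"
      apply (rule derivative_eq_intros dd1 \<nu>d | simp)+
      apply (simp add: fun_eq_iff n_def dxz)
      done
    have k2: "((\<lambda>v. dir_deriv x w v \<bullet> \<nu> v) has_derivative (\<lambda>y. d2 y \<bullet> n + m \<bullet> Dv y)) (at u)"
      apply (rule derivative_eq_intros dd2 \<nu>d | simp)+
      apply (simp add: fun_eq_iff n_def dxz[symmetric] wm')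
      done
    have e1: "d1 w \<bullet> n + dx u z \<bullet> Dv w = 0"
      by (rule halfspace_zero[OF k1 U uU ue e]) (simp add: zeroM[OF uM] zeroM M_def)
    have e2: "d2 z \<bullet> n + m \<bullet> Dv z = 0"
      by (rule halfspace_zero[OF k2 U uU ue e]) (simp add: zeroM[OF uM] zeroM M_def)
    have sym: "dir_deriv (dir_deriv x z) w u = dir_deriv (dir_deriv x w) z u"
      by (rule schwarz[OF U uU xdiffU ddiffU ddiffU differentiable_imp_continuous_on differentiable_imp_continuous_on])
         (rule dddiffU)+
    then have "d1 w = d2 z" by (simp add: d1_def d2_def dir_deriv_def)
    then show "dx u z \<bullet> dn = 0" using e1 e2 Dz[OF z] by (simp add: dn_def inner_commute)
  qed
  have we: "w \<bullet> e < 0"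
  proof -
    obtain w0 where w0: "w0 \<bullet> e < 0" "\<mu> u = dx u w0" using conormal ub by auto
    have "inj (dx u)" using immersion uM by auto
    then have "w = w0" using w0(2) wm by (simp add: inj_def)
    then show ?thesis using w0 by simp
  qed
  define X where "X = X_fld R a p"
  have np: "norm p = t" using pp by (metis norm_ge_zero power2_norm_eq_inner real_sqrt_abs abs_of_nonneg t0 less_imp_le real_sqrt_unique)
  have X_eq: "X = L *\<^sub>R ((p \<bullet> a) *\<^sub>R p - t^2 *\<^sub>R a)"
    by (simp add: X_def X_fld_def L_def t_def[symmetric] np)
  have Xp: "X \<bullet> p = 0" using pp by (simp add: X_eq inner_diff_left inner_diff_right inner_commute)
  define T where "T = X - (L^2 * (X \<bullet> nb)) *\<^sub>R nb"
  have Tp: "T \<bullet> p = 0" using Xp nbp by (simp add: T_def inner_diff_left)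
  have Tnb: "T \<bullet> nb = 0"
  proof -
    have "T \<bullet> nb = (X \<bullet> nb) * (1 - L^2 * (nb \<bullet> nb))" by (simp add: T_def inner_diff_left algebra_simps)
    then show ?thesis using nbnb by simp
  qed
  have Tn: "n \<bullet> T = 0" using Tp Tnb by (simp add: cn inner_add_right inner_diff_right inner_commute)
  have Tm: "m \<bullet> T = 0" using Tp Tnb by (simp add: cm inner_add_right inner_diff_right inner_commute)
  have n0: "n \<noteq> 0" using nn by auto
  have injdx: "inj (dx u)" using immersion uM by auto
  have rng: "range (dx u) = {y. n \<bullet> y = 0}"
    by (rule range_eq_hyperplane[OF lin_dx injdx n0 ndx dim])
  obtain z' where z': "T = dx u z'" using Tn rng by (metis (mono_tags, lifting) mem_Collect_eq rangeE)
  define k where "k = (z' \<bullet> e) / (w \<bullet> e)"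
  define z where "z = z' - k *\<^sub>R w"
  have ze: "z \<bullet> e = 0" using we by (simp add: z_def k_def inner_diff_left)
  have dxz_eq: "dx u z = T - k *\<^sub>R m" using lin_dx z' wm' by (simp add: z_def linear_diff linear_scale)
  have "m \<bullet> (T - k *\<^sub>R m) = 0" using mdx[OF ze] dxz_eq by simp
  then have "k * (m \<bullet> m) = 0" using Tm by (simp add: inner_diff_right)
  moreover have "m \<bullet> m \<noteq> 0" using mm by auto
  ultimately have "k = 0" by simp
  then have "dx u z = T" using dxz_eq by simp
  then have "T \<bullet> dn = 0" using D4[OF ze] by simp
  then have Xdn: "X \<bullet> dn = L^2 * (X \<bullet> nb) * (nb \<bullet> dn)" by (simp add: T_def inner_diff_left)
  define am where "am = a \<bullet> m"
  define an where "an = a \<bullet> n"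
  define mdn where "mdn = m \<bullet> dn"
  have pm: "p \<bullet> m = \<sigma> * s / L^2" using mm mn L0
    by (simp add: p_eq inner_diff_left inner_diff_right inner_commute field_simps)
  have pn: "p \<bullet> n = - (\<sigma> * c / L^2)" using nn mn L0
    by (simp add: p_eq inner_diff_left inner_diff_right inner_commute field_simps)
  have pa: "p \<bullet> a = \<sigma> * (s * am - c * an)"
    by (simp add: p_eq inner_diff_left inner_diff_right inner_commute am_def an_def)
  have ndn: "n \<bullet> dn = - (\<sigma> * s / L^3)"
  proof -
    have e: "1 - t^2 = 2 / L" using Lt L0 by (simp add: field_simps)
    have "2 * (n \<bullet> dn) + (2 / L) * (\<sigma> * s / L^2) = 0" using D1[of w] wm' pm unfolding e by (simp add: dn_def)
    then show ?thesis using L0 by (simp add: field_simps power3_eq_cube power2_eq_square)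
  qed
  have pdn: "p \<bullet> dn = \<sigma> * (s * mdn - c * (- (\<sigma> * s / L^3)))"
    using ndn by (simp add: p_eq inner_diff_left mdn_def)
  have Xnb: "X \<bullet> nb = - (L * t^2 * (c * am + s * an))"
    using nbp by (simp add: X_eq inner_diff_left nb_eq inner_add_right am_def an_def inner_commute algebra_simps)
  have nbdn: "nb \<bullet> dn = c * mdn + s * (- (\<sigma> * s / L^3))"
    using ndn by (simp add: nb_eq inner_add_left mdn_def)
  have Xdn2: "X \<bullet> dn = L * ((p \<bullet> a) * (p \<bullet> dn) - t^2 * (a \<bullet> dn))"
    by (simp add: X_eq inner_diff_left inner_diff_right inner_commute)
  have adn: "a \<bullet> dn = (\<sigma> * (s * am - c * an)) * (\<sigma> * (s * mdn - c * (- (\<sigma> * s / L^3)))) / t^2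
      + L^2 * (c * am + s * an) * (c * mdn + s * (- (\<sigma> * s / L^3)))"
  proof -
    have "L * ((p \<bullet> a) * (p \<bullet> dn) - t^2 * (a \<bullet> dn)) = L^2 * (- (L * t^2 * (c * am + s * an))) * (c * mdn + s * (- (\<sigma> * s / L^3)))"
      using Xdn Xdn2 Xnb nbdn by simp
    then have "L * ((\<sigma> * (s * am - c * an)) * (\<sigma> * (s * mdn - c * (- (\<sigma> * s / L^3)))) - t^2 * (a \<bullet> dn)) = L^2 * (- (L * t^2 * (c * am + s * an))) * (c * mdn + s * (- (\<sigma> * s / L^3)))"
      unfolding pa pdn .
    from solve_lin[OF _ _ this] show ?thesis using L0 t0 by simp
  qed
  have xx1: "x u \<bullet> x u \<noteq> 1" using pp t2 by (simp add: p_def)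
  have F2fun: "(\<lambda>v. gbar (x v) (X_fld R a (x v)) (\<nu> v)) = (\<lambda>v. 4 / (1 - x v \<bullet> x v)^2 * ((L *\<^sub>R ((x v \<bullet> a) *\<^sub>R x v - (1/2 * (x v \<bullet> x v + t^2)) *\<^sub>R a)) \<bullet> \<nu> v))"
    by (simp add: fun_eq_iff gbar_def X_fld_def power2_norm_eq_inner L_def t_def)
  have F1fun: "(\<lambda>v. V_fun a (x v) + sinh R * cos \<theta> * gbar (x v) (Y_fld a (x v)) (\<nu> v)) = (\<lambda>v. 2 * (x v \<bullet> a) / (1 - x v \<bullet> x v) + (sinh R * cos \<theta>) * (4 / (1 - x v \<bullet> x v)^2 * (((1/2 * (x v \<bullet> x v + 1)) *\<^sub>R a - (x v \<bullet> a) *\<^sub>R x v) \<bullet> \<nu> v)))"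
    by (simp add: fun_eq_iff gbar_def V_fun_def Y_fld_def power2_norm_eq_inner)
  have hmm: "gbar (x u) (cov_deriv (x u) (\<mu> u) (\<nu> u) (frechet_derivative \<nu> (at u) w)) (\<mu> u) = L^2 * mdn - \<sigma> * c / L"
  proof -
    have g: "grad_phi p = L *\<^sub>R p" using pp by (simp add: grad_phi_def L_def power2_norm_eq_inner)
    have "gbar (x u) (cov_deriv (x u) (\<mu> u) (\<nu> u) (frechet_derivative \<nu> (at u) w)) (\<mu> u)
       = L^2 * (cov_deriv p m n dn \<bullet> m)" using gB[OF ub] by (simp add: p_def m_def n_def dn_def Dv_def)
    also have "cov_deriv p m n dn \<bullet> m = mdn + L * (p \<bullet> n) * (m \<bullet> m)"
      by (simp add: cov_deriv_def g inner_add_left inner_diff_left inner_add_right inner_diff_right mn inner_commute mdn_def)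
    also have "L^2 * (mdn + L * (p \<bullet> n) * (m \<bullet> m)) = L^2 * mdn + L * (p \<bullet> n) * (L^2 * (m \<bullet> m))"
      by (simp add: algebra_simps)
    also have "\<dots> = L^2 * mdn - \<sigma> * c / L" using pn mm L0 by (simp add: power2_eq_square)
    finally show ?thesis .
  qed
  have mm': "m \<bullet> m = 1 / L^2" using mm L0 by (simp add: field_simps)
  have nn': "n \<bullet> n = 1 / L^2" using nn L0 by (simp add: field_simps)
  have cot: "cot \<theta> = c / s" by (simp add: cot_def c_def s_def)
  note e1 = frechet_derivative_at[OF F1_deriv[where a=a and K="sinh R * cos \<theta>", OF xd \<nu>d xx1]]
  note e2 = frechet_derivative_at[OF F2_deriv[where a=a and L=L and t=t, OF xd \<nu>d xx1]]
  have AT: "m \<bullet> a = am" "a \<bullet> m = am" "n \<bullet> a = an" "a \<bullet> n = an" "m \<bullet> dn = mdn" "dn \<bullet> m = mdn"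
     "n \<bullet> dn = - (\<sigma> * s / L^3)" "dn \<bullet> n = - (\<sigma> * s / L^3)"
     "m \<bullet> n = 0" "n \<bullet> m = 0" "m \<bullet> m = 1 / L^2" "n \<bullet> n = 1 / L^2"
    using ndn mn mm' nn' by (auto simp: am_def an_def mdn_def inner_commute)
  have AT2: "a \<bullet> dn = (\<sigma> * (s * am - c * an)) * (\<sigma> * (s * mdn - c * (- (\<sigma> * s / L^3)))) / t^2
      + L^2 * (c * am + s * an) * (c * mdn + s * (- (\<sigma> * s / L^3)))"
    "dn \<bullet> a = (\<sigma> * (s * am - c * an)) * (\<sigma> * (s * mdn - c * (- (\<sigma> * s / L^3)))) / t^2
      + L^2 * (c * am + s * an) * (c * mdn + s * (- (\<sigma> * s / L^3)))"
    using adn by (auto simp: inner_commute)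
  have sub: "x u = p" "\<nu> u = n" "dx u w = m" "Dv w = dn" "1 - t^2 = 2 / L"
    using wm' Lt L0 by (auto simp: p_def n_def dn_def field_simps)
  show "let h\<mu>\<mu> = gbar (x u) (cov_deriv (x u) (\<mu> u) (\<nu> u) (frechet_derivative \<nu> (at u) w)) (\<mu> u);
          q = (cosh R / sinh R) / sin \<theta> + cot \<theta> * h\<mu>\<mu>;
          F1 = (\<lambda>v. V_fun a (x v) + sinh R * cos \<theta> * gbar (x v) (Y_fld a (x v)) (\<nu> v));
          F2 = (\<lambda>v. gbar (x v) (X_fld R a (x v)) (\<nu> v))
      in frechet_derivative F1 (at u) w = q * F1 u \<and>
         frechet_derivative F2 (at u) w = q * F2 u"
    unfolding Let_def F1fun F2fun e1[symmetric] e2[symmetric] hmm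
    apply (simp only: sub pp)
    apply (simp only: p_eq inner_add_left inner_add_right inner_diff_left inner_diff_right inner_scaleR_left inner_scaleR_right inner_zero_left inner_zero_right AT AT2)
    apply (simp only: cot ch \<sigma>_def[symmetric] s_def[symmetric] c_def[symmetric] sg)
    apply (rule conjI)
    using L0 t0 s0 apply (simp add: field_simps)
    using sc Lt apply algebra
    using L0 t0 s0 apply (simp add: field_simps)
    using sc Lt apply algebra
    done
qed

end
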